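(* Let $n\ge1$ and $d\ge0$. The set $\mathcal D_{d,n}$ of admissible pairs is a doset on $\mathcal P_{d,n}$, and the poset $\mathcal P_{d,n}$ is a distributive lattice.
   Context: $\langle n\rangle=\{\bar n<\dots<\bar1<1<\dots<n\}$ with $\bar\imath=-i$; $\binom{\langle n\rangle}{n}$ is the set of $n$-element subsets $\alpha=\{\alpha_1<\dots<\alpha_n\}$ of $\langle n\rangle$. Let $\binom{\langle n\rangle}{n}_d:=\{\alpha^{(a)}\mid\alpha\in\binom{\langle n\rangle}{n},\ 0\le a\le d\}$, partially ordered by $\alpha^{(a)}\le\beta^{(b)}$ iff $a\le b$ and $\alpha_i\le\beta_{b-a+i}$ for $i=1,\dots,n-b+a$. An element $\alpha\in\binom{\langle n\rangle}{n}$ is admissible if for each $i\in[n]$ exactly one of $i,\bar\imath$ lies in $\alpha$; $\mathcal P_{d,n}$ is the subposet of $\binom{\langle n\rangle}{n}_d$ consisting of the $\alpha^{(a)}$ with $\alpha$ admissible. A cover $\alpha^{(a)}\lessdot\beta^{(a)}$ in $\mathcal P_{d,n}$ is of type (1) if $\alpha$ and $\beta$ have the same number of negative elements. A pair $(\alpha^{(a)},\beta^{(a)})$ with $\alpha^{(a)}<\beta^{(a)}$ is admissible if there is a saturated chain $\alpha^{(a)}=\gamma_0\lessdot\gamma_1\lessdot\dots\lessdot\gamma_s=\beta^{(a)}$ in $\mathcal P_{d,n}$ all of whose covers are of type (1); $\mathcal D_{d,n}$ consists of the admissible pairs together with the diagonal pairs $(\alpha^{(a)},\alpha^{(a)})$.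 A doset on a poset $\mathcal P$ is a set $\mathcal D$ with $\Delta_{\mathcal P}\subseteq\mathcal D\subseteq\{(x,y)\in\mathcal P\times\mathcal P\mid x\le y\}$ such that whenever $x\le y\le z$, $(x,z)\in\mathcal D$ iff both $(x,y)\in\mathcal D$ and $(y,z)\in\mathcal D$. *)

theory Defs
  imports Main
begin

definition signed_set :: "nat \<Rightarrow> int set" where
  "signed_set n = {i. i \<noteq> 0 \<and> \<bar>i\<bar> \<le> int n}"

text \<open>An element alpha^(a) of binom(<n>,n)_d is represented as the pair (alpha, a).\<close>
type_synonym elt = "int set \<times> nat"

text \<open>The i-th smallest element of alpha (0-based index i, i.e. alpha_(i+1)).\<close>
definition ent :: "int set \<Rightarrow> nat \<Rightarrow> int" where
  "ent A i = sorted_list_of_set A ! i"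

definition binom_d :: "nat \<Rightarrow> nat \<Rightarrow> elt set" where
  "binom_d n d = {(A, a). A \<subseteq> signed_set n \<and> card A = n \<and> a \<le> d}"

definition leq :: "nat \<Rightarrow> elt \<Rightarrow> elt \<Rightarrow> bool" where
  "leq n x y \<longleftrightarrow> snd x \<le> snd y \<and>
     (\<forall>i. i < n - (snd y - snd x) \<longrightarrow> ent (fst x) i \<le> ent (fst y) (snd y - snd x + i))"

definition admissible :: "nat \<Rightarrow> int set \<Rightarrow> bool" where
  "admissible n A \<longleftrightarrow> (\<forall>i::nat. 1 \<le> i \<and> i \<le> n \<longrightarrow> ((int i \<in> A) \<noteq> (- int i \<in> A)))"

definition P :: "nat \<Rightarrow> nat \<Rightarrow> elt set" where
  "P d n = {x \<in> binom_d n d. admissible n (fst x)}"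

definition lt :: "nat \<Rightarrow> elt \<Rightarrow> elt \<Rightarrow> bool" where
  "lt n x y \<longleftrightarrow> leq n x y \<and> x \<noteq> y"

definition covers :: "nat \<Rightarrow> nat \<Rightarrow> elt \<Rightarrow> elt \<Rightarrow> bool" where
  "covers d n x y \<longleftrightarrow> x \<in> P d n \<and> y \<in> P d n \<and> lt n x y \<and>
     \<not> (\<exists>z \<in> P d n. lt n x z \<and> lt n z y)"

definition negs :: "int set \<Rightarrow> nat" where
  "negs A = card {i \<in> A. i < 0}"

definition cover_type1 :: "nat \<Rightarrow> nat \<Rightarrow> elt \<Rightarrow> elt \<Rightarrow> bool" where
  "cover_type1 d n x y \<longleftrightarrow> covers d n x y \<and> snd x = snd y \<and> negs (fst x) = negs (fst y)"

definition admissible_pair :: "nat \<Rightarrow> nat \<Rightarrow> elt \<Rightarrow> elt \<Rightarrow> bool" where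
  "admissible_pair d n x y \<longleftrightarrow> x \<in> P d n \<and> y \<in> P d n \<and> snd x = snd y \<and> lt n x y \<and>
     (\<exists>gs. length gs \<ge> 2 \<and> hd gs = x \<and> last gs = y \<and>
        (\<forall>i. Suc i < length gs \<longrightarrow> cover_type1 d n (gs ! i) (gs ! Suc i)))"

definition D :: "nat \<Rightarrow> nat \<Rightarrow> (elt \<times> elt) set" where
  "D d n = {(x, y). admissible_pair d n x y} \<union> {(x, x) | x. x \<in> P d n}"

definition doset :: "'a set \<Rightarrow> ('a \<Rightarrow> 'a \<Rightarrow> bool) \<Rightarrow> ('a \<times> 'a) set \<Rightarrow> bool" where
  "doset S le DD \<longleftrightarrow>
     {(x, x) | x. x \<in> S} \<subseteq> DD \<and> DD \<subseteq> {(x, y). x \<in> S \<and> y \<in> S \<and> le x y} \<and>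
     (\<forall>x\<in>S. \<forall>y\<in>S. \<forall>z\<in>S. le x y \<and> le y z \<longrightarrow>
        ((x, z) \<in> DD \<longleftrightarrow> (x, y) \<in> DD \<and> (y, z) \<in> DD))"

definition partial_order_on' :: "'a set \<Rightarrow> ('a \<Rightarrow> 'a \<Rightarrow> bool) \<Rightarrow> bool" where
  "partial_order_on' S le \<longleftrightarrow>
     (\<forall>x\<in>S. le x x) \<and> (\<forall>x\<in>S. \<forall>y\<in>S. le x y \<and> le y x \<longrightarrow> x = y) \<and>
     (\<forall>x\<in>S. \<forall>y\<in>S. \<forall>z\<in>S. le x y \<and> le y z \<longrightarrow> le x z)"

definition is_join :: "'a set \<Rightarrow> ('a \<Rightarrow> 'a \<Rightarrow> bool) \<Rightarrow> 'a \<Rightarrow> 'a \<Rightarrow> 'a \<Rightarrow> bool" where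
  "is_join S le x y j \<longleftrightarrow> j \<in> S \<and> le x j \<and> le y j \<and> (\<forall>u\<in>S. le x u \<and> le y u \<longrightarrow> le j u)"

definition is_meet :: "'a set \<Rightarrow> ('a \<Rightarrow> 'a \<Rightarrow> bool) \<Rightarrow> 'a \<Rightarrow> 'a \<Rightarrow> 'a \<Rightarrow> bool" where
  "is_meet S le x y m \<longleftrightarrow> m \<in> S \<and> le m x \<and> le m y \<and> (\<forall>u\<in>S. le u x \<and> le u y \<longrightarrow> le u m)"

definition distrib_lattice_on :: "'a set \<Rightarrow> ('a \<Rightarrow> 'a \<Rightarrow> bool) \<Rightarrow> bool" where
  "distrib_lattice_on S le \<longleftrightarrow> partial_order_on' S le \<and>
     (\<forall>x\<in>S. \<forall>y\<in>S. (\<exists>j. is_join S le x y j) \<and> (\<exists>m. is_meet S le x y m)) \<and>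
     (\<forall>x\<in>S. \<forall>y\<in>S. \<forall>z\<in>S. \<forall>s t v u w.
        is_join S le y z s \<and> is_meet S le x s u \<and> is_meet S le x y t \<and>
        is_meet S le x z v \<and> is_join S le t v w \<longrightarrow> u = w)"

end

theory Submission
  imports Defs
begin


definition cnt :: "int set \<Rightarrow> int \<Rightarrow> nat" where
  "cnt A v = card {w\<in>A. w \<le> v}"

definition G :: "elt \<Rightarrow> int \<Rightarrow> int" where
  "G x v = int (cnt (fst x) v) - int (snd x)"

definition W :: "nat \<Rightarrow> int set" where
  "W n = {- int n - 1 .. int n}"

lemma finite_signed: "finite (signed_set n)"
proof -
  have "signed_set n \<subseteq> {- int n .. int n}" by (auto simp: signed_set_def)
  then show ?thesis using finite_subset by blast
qed

lemma P_memD: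
  assumes "x \<in> P d n"
  shows "fst x \<subseteq> signed_set n" "card (fst x) = n" "snd x \<le> d" "admissible n (fst x)"
    "finite (fst x)"
  using assms finite_subset[OF _ finite_signed]
  by (auto simp: P_def binom_d_def)

lemma cnt_step:
  assumes "finite A"
  shows "cnt A v = cnt A (v-1) + (if v \<in> A then 1 else 0)"
proof -
  show ?thesis
  proof (cases "v \<in> A")
    case True
    have e: "{w\<in>A. w \<le> v} = insert v {w\<in>A. w \<le> v-1}" using True by auto
    have f: "finite {w\<in>A. w \<le> v-1}" using assms by simp
    show ?thesis unfolding cnt_def e using f True by simp
  next
    case False
    have e: "{w\<in>A. w \<le> v} = {w\<in>A. w \<le> v-1}"
    proof (intro set_eqI iffI)
      fix x assume "x \<in> {w\<in>A. w \<le> v}"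
      then show "x \<in> {w\<in>A. w \<le> v-1}" using False by (cases "x = v") auto
    qed auto
    show ?thesis unfolding cnt_def e using False by simp
  qed
qed

lemma cnt_low:
  assumes "A \<subseteq> signed_set n" shows "cnt A (- int n - 1) = 0"
proof -
  have "{w\<in>A. w \<le> - int n - 1} = {}" using assms by (force simp: signed_set_def)
  then show ?thesis unfolding cnt_def by (simp only: card.empty)
qed

lemma cnt_high:
  assumes "A \<subseteq> signed_set n" shows "cnt A (int n) = card A"
proof -
  have "{w\<in>A. w \<le> int n} = A" using assms by (auto simp: signed_set_def)
  then show ?thesis by (simp add: cnt_def)
qed

lemma cnt_le_card: "finite A \<Longrightarrow> cnt A v \<le> card A"
  unfolding cnt_def by (rule card_mono) auto

lemma ent_cnt:
  assumes fin: "finite A" and i: "i < card A"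
  shows "ent A i \<le> v \<longleftrightarrow> i < cnt A v"
proof -
  define xs where "xs = sorted_list_of_set A"
  have len: "length xs = card A" using fin by (simp add: xs_def length_sorted_list_of_set)
  have st: "set xs = A" using fin by (simp add: xs_def set_sorted_list_of_set)
  have so: "sorted xs" by (simp add: xs_def sorted_sorted_list_of_set)
  have di: "distinct xs" by (simp add: xs_def distinct_sorted_list_of_set)
  have ent: "ent A i = xs ! i" by (simp add: ent_def xs_def)
  show ?thesis
  proof
    assume le: "ent A i \<le> v"
    have sub: "(\<lambda>j. xs ! j) ` {..i} \<subseteq> {w\<in>A. w \<le> v}"
    proof
      fix w assume "w \<in> (\<lambda>j. xs ! j) ` {..i}"
      then obtain j where j: "j \<le> i" "w = xs ! j" by auto
      have "xs ! j \<le> xs ! i" using sorted_nth_mono[OF so j(1)] i len by simp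
      moreover have "xs ! j \<in> A" using st j i len by (metis le_less_trans nth_mem)
      ultimately show "w \<in> {w\<in>A. w \<le> v}" using j le ent by auto
    qed
    have inj: "inj_on (\<lambda>j. xs ! j) {..i}"
      using di i len by (auto simp: inj_on_def nth_eq_iff_index_eq)
    have "card ((\<lambda>j. xs ! j) ` {..i}) = Suc i" using card_image[OF inj] by simp
    moreover have "card ((\<lambda>j. xs ! j) ` {..i}) \<le> cnt A v"
      unfolding cnt_def by (rule card_mono) (use fin sub in auto)
    ultimately show "i < cnt A v" by simp
  next
    assume lt: "i < cnt A v"
    show "ent A i \<le> v"
    proof (rule ccontr)
      assume "\<not> ent A i \<le> v"
      then have gt: "v < xs ! i" using ent by simp
      have sub: "{w\<in>A. w \<le> v} \<subseteq> (\<lambda>j. xs ! j) ` {..<i}"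
      proof
        fix w assume w: "w \<in> {w\<in>A. w \<le> v}"
        then obtain j where j: "j < length xs" "w = xs ! j" using st by (auto simp: in_set_conv_nth)
        have "j < i"
        proof (rule ccontr)
          assume "\<not> j < i"
          then have "xs ! i \<le> xs ! j" using sorted_nth_mono[OF so _ j(1)] by simp
          then show False using w j gt by auto
        qed
        then show "w \<in> (\<lambda>j. xs ! j) ` {..<i}" using j by auto
      qed
      have "cnt A v \<le> card ((\<lambda>j. xs ! j) ` {..<i})"
        unfolding cnt_def by (rule card_mono) (use sub in auto)
      also have "\<dots> \<le> i" using card_image_le[of "{..<i}" "\<lambda>j. xs ! j"] by simp
      finally show False using lt by simp
    qed
  qed
qed

lemma ent_mem:
  assumes "finite A" "i < card A" shows "ent A i \<in> A"
  using assms by (metis ent_def length_sorted_list_of_set nth_mem set_sorted_list_of_set)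



lemma leq_iff:
  assumes x: "x \<in> P d n" and y: "y \<in> P d n"
  shows "leq n x y \<longleftrightarrow> (\<forall>v\<in>W n. G y v \<le> G x v)"
proof -
  obtain A a where xa: "x = (A, a)" by (cases x)
  obtain B b where yb: "y = (B, b)" by (cases y)
  have As: "A \<subseteq> signed_set n" "card A = n" "finite A" using P_memD[OF x] xa by auto
  have Bs: "B \<subseteq> signed_set n" "card B = n" "finite B" using P_memD[OF y] yb by auto
  show ?thesis
  proof
    assume le: "leq n x y"
    then have ab: "a \<le> b" using xa yb by (simp add: leq_def)
    define k where "k = b - a"
    have cmp: "\<And>i. i < n - k \<Longrightarrow> ent A i \<le> ent B (k + i)"
      using le unfolding xa yb leq_def k_def fst_conv snd_conv by blast
    have main: "cnt B v \<le> cnt A v + k" for v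
    proof (rule ccontr)
      assume "\<not> cnt B v \<le> cnt A v + k"
      then have m: "cnt A v + k < cnt B v" by simp
      define m where "m = cnt B v"
      have mn: "m \<le> n" using cnt_le_card[OF Bs(3)] Bs(2) by (simp add: m_def)
      define i where "i = m - 1 - k"
      have ik: "k + i = m - 1" using m by (simp add: i_def m_def)
      have i1: "i < n - k" using m mn by (simp add: i_def m_def)
      have "ent A i \<le> ent B (k + i)" using cmp[OF i1] .
      moreover have "ent B (k + i) \<le> v"
        using ent_cnt[OF Bs(3), of "k+i" v] ik m mn Bs(2) by (simp add: m_def)
      ultimately have "ent A i \<le> v" by simp
      then have "i < cnt A v" using ent_cnt[OF As(3), of i v] i1 As(2) by simp
      then show False using m by (simp add: i_def m_def)
    qed
    have kk: "int k = int b - int a" using ab by (simp add: k_def of_nat_diff)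
    show "\<forall>v\<in>W n. G y v \<le> G x v"
    proof
      fix v
      have "int (cnt B v) \<le> int (cnt A v + k)" using main[of v] by (simp only: of_nat_le_iff)
      then show "G y v \<le> G x v" using kk by (simp add: G_def xa yb)
    qed
  next
    assume H: "\<forall>v\<in>W n. G y v \<le> G x v"
    have "int n \<in> W n" by (simp add: W_def)
    then have "G y (int n) \<le> G x (int n)" using H by blast
    then have ab: "a \<le> b" using xa yb cnt_high[OF As(1)] cnt_high[OF Bs(1)] As(2) Bs(2)
      by (simp add: G_def)
    define k where "k = b - a"
    have kk: "int k = int b - int a" using ab by (simp add: k_def of_nat_diff)
    have c: "cnt B v \<le> cnt A v + k" if "v \<in> W n" for v
    proof -
      have "G y v \<le> G x v" using H that by blast
      then have "int (cnt B v) \<le> int (cnt A v + k)" using kk by (simp add: G_def xa yb)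
      then show ?thesis by (simp only: of_nat_le_iff)
    qed
    have "ent A i \<le> ent B (k + i)" if i: "i < n - k" for i
    proof -
      define v where "v = ent B (k + i)"
      have kin: "k + i < card B" using i Bs(2) by simp
      have "v \<in> B" using ent_mem[OF Bs(3) kin] by (simp add: v_def)
      then have vW: "v \<in> W n" using Bs(1) by (auto simp: W_def signed_set_def)
      have "k + i < cnt B v" using ent_cnt[OF Bs(3) kin, of v] by (simp add: v_def)
      then have "i < cnt A v" using c[OF vW] by simp
      then show ?thesis using ent_cnt[OF As(3), of i v] i As(2) by (simp add: v_def)
    qed
    then show "leq n x y" using ab xa yb by (simp add: leq_def k_def)
  qed
qed

lemma G_low: "x \<in> P d n \<Longrightarrow> G x (- int n - 1) = - int (snd x)"
  using cnt_low[OF P_memD(1)] by (simp add: G_def)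

lemma G_inj:
  assumes x: "x \<in> P d n" and y: "y \<in> P d n" and e: "\<forall>v\<in>W n. G x v = G y v"
  shows "x = y"
proof -
  have lw: "- int n - 1 \<in> W n" by (simp add: W_def)
  have s: "snd x = snd y" using e lw G_low[OF x] G_low[OF y] by force
  have ce: "cnt (fst x) v = cnt (fst y) v" if "v \<in> W n" for v
    using e that s by (simp add: G_def)
  have "fst x = fst y"
  proof (intro set_eqI)
    fix v
    show "v \<in> fst x \<longleftrightarrow> v \<in> fst y"
    proof (cases "v \<in> signed_set n")
      case True
      then have "v \<in> W n" "v - 1 \<in> W n" by (auto simp: W_def signed_set_def)
      then show ?thesis using ce[of v] ce[of "v-1"] cnt_step[OF P_memD(5)[OF x], of v] cnt_step[OF P_memD(5)[OF y], of v]
        by (cases "v \<in> fst x"; cases "v \<in> fst y") simp_all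
    next
      case False
      then show ?thesis using P_memD(1)[OF x] P_memD(1)[OF y] by auto
    qed
  qed
  then show ?thesis using s by (simp add: prod_eq_iff)
qed

lemma G_inc:
  assumes x: "x \<in> P d n"
  shows "G x v = G x (v - 1) + (if v \<in> fst x then 1 else 0)"
  using cnt_step[OF P_memD(5)[OF x], of v] by (simp add: G_def)

lemma cnt_sym:
  assumes x: "x \<in> P d n" and j: "1 \<le> j" "j \<le> int n + 1"
  shows "int (cnt (fst x) (- j)) = int (cnt (fst x) (j - 1)) - j + 1"
proof -
  let ?A = "fst x"
  have fin: "finite ?A" by (rule P_memD(5)[OF x])
  have adm: "admissible n ?A" by (rule P_memD(4)[OF x])
  have "j \<le> int n + 1" using j by simp
  then show ?thesis using j(1)
  proof (induction j rule: int_le_induct)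
    case base
    have e: "- (int n + 1) = - int n - 1" by simp
    show ?case unfolding e using cnt_low[OF P_memD(1)[OF x]] cnt_high[OF P_memD(1)[OF x]] P_memD(2)[OF x]
      by (simp add: algebra_simps)
  next
    case (step i)
    show ?case
    proof (cases "1 \<le> i")
      case False
      then have "i = 1" using step by simp
      then show ?thesis using step by simp
    next
      case True
      then have IH: "int (cnt ?A (- i)) = int (cnt ?A (i - 1)) - i + 1" using step by simp
      have s1: "cnt ?A (- (i - 1)) = cnt ?A (- i) + (if - (i - 1) \<in> ?A then 1 else 0)"
        using cnt_step[OF fin, of "- (i - 1)"] by simp
      have s2: "cnt ?A (i - 1) = cnt ?A (i - 1 - 1) + (if i - 1 \<in> ?A then 1 else 0)"
        using cnt_step[OF fin, of "i - 1"] by simp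
      have rng: "1 \<le> nat (i - 1)" "nat (i - 1) \<le> n" using step True by auto
      have "(int (nat (i-1)) \<in> ?A) \<noteq> (- int (nat (i-1)) \<in> ?A)"
        using adm rng unfolding admissible_def by blast
      then have ex: "(i - 1 \<in> ?A) \<noteq> (- (i - 1) \<in> ?A)" using step by simp
      show ?thesis
      proof (cases "i - 1 \<in> ?A")
        case True
        then have "- (i - 1) \<notin> ?A" using ex by blast
        then show ?thesis using IH s1 s2 True by simp
      next
        case False
        then have "- (i - 1) \<in> ?A" using ex by blast
        then show ?thesis using IH s1 s2 False by simp
      qed
    qed
  qed
qed

lemma G_sym:
  assumes x: "x \<in> P d n" and j: "1 \<le> j" "j \<le> int n + 1"
  shows "G x (- j) = G x (j - 1) - j + 1"
  using cnt_sym[OF assms] by (simp add: G_def)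

lemma G_zero: "x \<in> P d n \<Longrightarrow> G x 0 = G x (-1)"
  using G_inc[of x d n 0] P_memD(1)[of x d n] by (auto simp: signed_set_def)



lemma build:
  fixes H :: "int \<Rightarrow> int" and c :: nat
  assumes h1: "\<And>v. - int n - 1 < v \<Longrightarrow> v \<le> int n \<Longrightarrow> H (v-1) \<le> H v \<and> H v \<le> H (v-1) + 1"
    and h2: "H 0 = H (-1)"
    and h3: "\<And>j. 1 \<le> j \<Longrightarrow> j \<le> int n + 1 \<Longrightarrow> H (-j) = H (j-1) - j + 1"
    and h4: "H (- int n - 1) = - int c" and h5: "c \<le> d"
  shows "\<exists>z\<in>P d n. \<forall>v\<in>W n. G z v = H v"
proof -
  define C where "C = {v \<in> signed_set n. H v = H (v-1) + 1}"
  have Cs: "C \<subseteq> signed_set n" by (auto simp: C_def)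
  have finC: "finite C" using Cs finite_signed finite_subset by blast
  have cntC: "v \<le> int n \<longrightarrow> int (cnt C v) = H v - H (- int n - 1)"
    if "- int n - 1 \<le> v" for v
    using that
  proof (induction v rule: int_ge_induct)
    case base
    then show ?case using cnt_low[OF Cs] by simp
  next
    case (step i)
    show ?case
    proof
      assume i1: "i + 1 \<le> int n"
      then have IH: "int (cnt C i) = H i - H (- int n - 1)" using step by simp
      have s: "cnt C (i+1) = cnt C i + (if i + 1 \<in> C then 1 else 0)"
        using cnt_step[OF finC, of "i+1"] by simp
      have hh: "H i \<le> H (i+1) \<and> H (i+1) \<le> H i + 1" using h1[of "i+1"] step i1 by simp
      show "int (cnt C (i + 1)) = H (i + 1) - H (- int n - 1)"
      proof (cases "i + 1 \<in> C")
        case True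
        then have "H (i+1) = H i + 1" by (simp add: C_def)
        then show ?thesis using s IH True by simp
      next
        case False
        have "H (i+1) = H i"
        proof (cases "i + 1 = 0")
          case True
          then have "i = -1" by simp
          then show ?thesis using h2 by simp
        next
          case False2: False
          then have "i + 1 \<in> signed_set n" using step i1 by (auto simp: signed_set_def)
          then have "H (i+1) \<noteq> H i + 1" using False by (simp add: C_def)
          then show ?thesis using hh by simp
        qed
        then show ?thesis using s IH False by simp
      qed
    qed
  qed
  have top: "H (- int n - 1) = H (int n) - int n"
  proof -
    have e: "- (int n + 1) = - int n - 1" by simp
    show ?thesis using h3[of "int n + 1", unfolded e] by simp
  qed
  have cardC: "card C = n"
  proof -
    have "int (cnt C (int n)) = H (int n) - H (- int n - 1)" using cntC[of "int n"] by simp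
    then have "int (card C) = int n" using cnt_high[OF Cs] top by simp
    then show ?thesis by simp
  qed
  have admC: "admissible n C"
    unfolding admissible_def
  proof (intro allI impI)
    fix i :: nat assume i: "1 \<le> i \<and> i \<le> n"
    define j where "j = int i"
    have j: "1 \<le> j" "j \<le> int n" using i by (auto simp: j_def)
    have a1: "H (-j) = H (j-1) - j + 1" using h3[of j] j by simp
    have e2: "- (j + 1) = -j - 1" by simp
    have a2: "H (-j - 1) = H j - j" using h3[of "j+1", unfolded e2] j by simp
    have a3: "H (j-1) \<le> H j \<and> H j \<le> H (j-1) + 1" using h1[of j] j by simp
    have js: "j \<in> signed_set n" "-j \<in> signed_set n" using j by (auto simp: signed_set_def)
    have m1: "j \<in> C \<longleftrightarrow> H j = H (j-1) + 1" using js by (simp add: C_def)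
    have m2: "-j \<in> C \<longleftrightarrow> H (-j) = H (-j-1) + 1" using js by (simp add: C_def)
    have m3: "-j \<in> C \<longleftrightarrow> H j = H (j-1)"
    proof -
      have "H (-j) = H (-j-1) + 1 \<longleftrightarrow> H j = H (j-1)"
      proof
        assume "H (-j) = H (-j-1) + 1" then show "H j = H (j-1)" using a1 a2 by linarith
      next
        assume "H j = H (j-1)" then show "H (-j) = H (-j-1) + 1" using a1 a2 by linarith
      qed
      then show ?thesis using m2 by blast
    qed
    have "(j \<in> C) \<noteq> (-j \<in> C)"
    proof (cases "H j = H (j-1)")
      case True
      then have "\<not> H j = H (j-1) + 1" by linarith
      then show ?thesis using m1 m3 True by blast
    next
      case False
      then have "H j = H (j-1) + 1" using a3 by linarith
      then show ?thesis using m1 m3 False by blast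
    qed
    then show "(int i \<in> C) \<noteq> (- int i \<in> C)" by (simp add: j_def)
  qed
  have zP: "(C, c) \<in> P d n" using Cs cardC h5 admC by (simp add: P_def binom_d_def)
  have "\<forall>v\<in>W n. G (C, c) v = H v"
  proof
    fix v assume "v \<in> W n"
    then have "- int n - 1 \<le> v" "v \<le> int n" by (auto simp: W_def)
    then show "G (C, c) v = H v" using cntC[of v] h4 by (simp add: G_def)
  qed
  then show ?thesis using zP by blast
qed

lemma G_step: "x \<in> P d n \<Longrightarrow> G x (v-1) \<le> G x v \<and> G x v \<le> G x (v-1) + 1"
  using G_inc[of x d n v] by (auto split: if_splits)

lemma meet_ex:
  assumes x: "x \<in> P d n" and y: "y \<in> P d n"
  shows "\<exists>z\<in>P d n. \<forall>v\<in>W n. G z v = max (G x v) (G y v)"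
proof (rule build)
  fix v :: int
  show "max (G x (v - 1)) (G y (v - 1)) \<le> max (G x v) (G y v) \<and>
        max (G x v) (G y v) \<le> max (G x (v - 1)) (G y (v - 1)) + 1"
    using G_step[OF x, of v] G_step[OF y, of v] by linarith
next
  show "max (G x 0) (G y 0) = max (G x (-1)) (G y (-1))" using G_zero[OF x] G_zero[OF y] by simp
next
  fix j :: int assume "1 \<le> j" "j \<le> int n + 1"
  then show "max (G x (-j)) (G y (-j)) = max (G x (j - 1)) (G y (j - 1)) - j + 1"
    using G_sym[OF x, of j] G_sym[OF y, of j] by linarith
next
  show "max (G x (- int n - 1)) (G y (- int n - 1)) = - int (min (snd x) (snd y))"
    using G_low[OF x] G_low[OF y] by linarith
next
  show "min (snd x) (snd y) \<le> d" using P_memD(3)[OF x] by linarith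
qed

lemma join_ex:
  assumes x: "x \<in> P d n" and y: "y \<in> P d n"
  shows "\<exists>z\<in>P d n. \<forall>v\<in>W n. G z v = min (G x v) (G y v)"
proof (rule build)
  fix v :: int
  show "min (G x (v - 1)) (G y (v - 1)) \<le> min (G x v) (G y v) \<and>
        min (G x v) (G y v) \<le> min (G x (v - 1)) (G y (v - 1)) + 1"
    using G_step[OF x, of v] G_step[OF y, of v] by linarith
next
  show "min (G x 0) (G y 0) = min (G x (-1)) (G y (-1))" using G_zero[OF x] G_zero[OF y] by simp
next
  fix j :: int assume "1 \<le> j" "j \<le> int n + 1"
  then show "min (G x (-j)) (G y (-j)) = min (G x (j - 1)) (G y (j - 1)) - j + 1"
    using G_sym[OF x, of j] G_sym[OF y, of j] by linarith
next
  show "min (G x (- int n - 1)) (G y (- int n - 1)) = - int (max (snd x) (snd y))"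
    using G_low[OF x] G_low[OF y] by linarith
next
  show "max (snd x) (snd y) \<le> d" using P_memD(3)[OF x] P_memD(3)[OF y] by linarith
qed



lemma leq_refl: "x \<in> P d n \<Longrightarrow> leq n x x"
  using leq_iff[of x d n x] by simp

lemma leq_antisym: "x \<in> P d n \<Longrightarrow> y \<in> P d n \<Longrightarrow> leq n x y \<Longrightarrow> leq n y x \<Longrightarrow> x = y"
  using leq_iff[of x d n y] leq_iff[of y d n x] G_inj[of x d n y] by (meson order_antisym)

lemma leq_trans: "x \<in> P d n \<Longrightarrow> y \<in> P d n \<Longrightarrow> z \<in> P d n \<Longrightarrow> leq n x y \<Longrightarrow> leq n y z \<Longrightarrow> leq n x z"
  using leq_iff[of x d n y] leq_iff[of y d n z] leq_iff[of x d n z] by (meson order_trans)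

lemma po: "partial_order_on' (P d n) (leq n)"
  unfolding partial_order_on'_def
proof (intro conjI ballI impI)
  fix x assume "x \<in> P d n" then show "leq n x x" by (rule leq_refl)
next
  fix x y assume "x \<in> P d n" "y \<in> P d n" "leq n x y \<and> leq n y x"
  then show "x = y" using leq_antisym by blast
next
  fix x y z assume "x \<in> P d n" "y \<in> P d n" "z \<in> P d n" "leq n x y \<and> leq n y z"
  then show "leq n x z" using leq_trans by blast
qed

lemma meet_G:
  assumes x: "x \<in> P d n" and y: "y \<in> P d n" and m: "is_meet (P d n) (leq n) x y m"
  shows "\<forall>v\<in>W n. G m v = max (G x v) (G y v)"
proof -
  obtain z where z: "z \<in> P d n" "\<forall>v\<in>W n. G z v = max (G x v) (G y v)" using meet_ex[OF x y] by blast
  have mP: "m \<in> P d n" using m by (simp add: is_meet_def)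
  have zx: "leq n z x" using leq_iff[OF z(1) x] z(2) by simp
  have zy: "leq n z y" using leq_iff[OF z(1) y] z(2) by simp
  have "leq n z m" using m z(1) zx zy by (simp add: is_meet_def)
  then have a: "\<forall>v\<in>W n. G m v \<le> G z v" using leq_iff[OF z(1) mP] by simp
  have "leq n m x" "leq n m y" using m by (auto simp: is_meet_def)
  then have b: "\<forall>v\<in>W n. G x v \<le> G m v \<and> G y v \<le> G m v" using leq_iff[OF mP x] leq_iff[OF mP y] by simp
  show ?thesis
  proof
    fix v assume v: "v \<in> W n"
    have "G m v \<le> max (G x v) (G y v)" using a z(2) v by simp
    moreover have "max (G x v) (G y v) \<le> G m v" using b v by simp
    ultimately show "G m v = max (G x v) (G y v)" by (rule antisym)
  qed
qed

lemma join_G: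
  assumes x: "x \<in> P d n" and y: "y \<in> P d n" and m: "is_join (P d n) (leq n) x y m"
  shows "\<forall>v\<in>W n. G m v = min (G x v) (G y v)"
proof -
  obtain z where z: "z \<in> P d n" "\<forall>v\<in>W n. G z v = min (G x v) (G y v)" using join_ex[OF x y] by blast
  have mP: "m \<in> P d n" using m by (simp add: is_join_def)
  have zx: "leq n x z" using leq_iff[OF x z(1)] z(2) by simp
  have zy: "leq n y z" using leq_iff[OF y z(1)] z(2) by simp
  have "leq n m z" using m z(1) zx zy by (simp add: is_join_def)
  then have a: "\<forall>v\<in>W n. G z v \<le> G m v" using leq_iff[OF mP z(1)] by simp
  have "leq n x m" "leq n y m" using m by (auto simp: is_join_def)
  then have b: "\<forall>v\<in>W n. G m v \<le> G x v \<and> G m v \<le> G y v" using leq_iff[OF x mP] leq_iff[OF y mP] by simp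
  show ?thesis
  proof
    fix v assume v: "v \<in> W n"
    have "min (G x v) (G y v) \<le> G m v" using a z(2) v by simp
    moreover have "G m v \<le> min (G x v) (G y v)" using b v by simp
    ultimately show "G m v = min (G x v) (G y v)" by (rule antisym[rotated])
  qed
qed

lemma meet_exists:
  assumes x: "x \<in> P d n" and y: "y \<in> P d n"
  shows "\<exists>m. is_meet (P d n) (leq n) x y m"
proof -
  obtain z where z: "z \<in> P d n" "\<forall>v\<in>W n. G z v = max (G x v) (G y v)" using meet_ex[OF x y] by blast
  have "is_meet (P d n) (leq n) x y z"
    unfolding is_meet_def
  proof (intro conjI ballI impI)
    show "z \<in> P d n" by fact
    show "leq n z x" using leq_iff[OF z(1) x] z(2) by simp
    show "leq n z y" using leq_iff[OF z(1) y] z(2) by simp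
    fix u assume u: "u \<in> P d n" and "leq n u x \<and> leq n u y"
    then have "\<forall>v\<in>W n. G x v \<le> G u v \<and> G y v \<le> G u v" using leq_iff[OF u x] leq_iff[OF u y] by simp
    then show "leq n u z" using leq_iff[OF u z(1)] z(2) by simp
  qed
  then show ?thesis by blast
qed

lemma join_exists:
  assumes x: "x \<in> P d n" and y: "y \<in> P d n"
  shows "\<exists>m. is_join (P d n) (leq n) x y m"
proof -
  obtain z where z: "z \<in> P d n" "\<forall>v\<in>W n. G z v = min (G x v) (G y v)" using join_ex[OF x y] by blast
  have "is_join (P d n) (leq n) x y z"
    unfolding is_join_def
  proof (intro conjI ballI impI)
    show "z \<in> P d n" by fact
    show "leq n x z" using leq_iff[OF x z(1)] z(2) by simp
    show "leq n y z" using leq_iff[OF y z(1)] z(2) by simp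
    fix u assume u: "u \<in> P d n" and "leq n x u \<and> leq n y u"
    then have "\<forall>v\<in>W n. G u v \<le> G x v \<and> G u v \<le> G y v" using leq_iff[OF x u] leq_iff[OF y u] by simp
    then show "leq n z u" using leq_iff[OF z(1) u] z(2) by simp
  qed
  then show ?thesis by blast
qed

lemma distrib: "distrib_lattice_on (P d n) (leq n)"
  unfolding distrib_lattice_on_def
proof (intro conjI ballI allI impI)
  show "partial_order_on' (P d n) (leq n)" by (rule po)
next
  fix x y assume "x \<in> P d n" "y \<in> P d n"
  then show "\<exists>j. is_join (P d n) (leq n) x y j" "\<exists>m. is_meet (P d n) (leq n) x y m"
    using join_exists meet_exists by blast+
next
  fix x y z s t v u w
  assume x: "x \<in> P d n" and y: "y \<in> P d n" and z: "z \<in> P d n"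
    and H: "is_join (P d n) (leq n) y z s \<and> is_meet (P d n) (leq n) x s u \<and> is_meet (P d n) (leq n) x y t \<and>
        is_meet (P d n) (leq n) x z v \<and> is_join (P d n) (leq n) t v w"
  have sP: "s \<in> P d n" "t \<in> P d n" "v \<in> P d n" "u \<in> P d n" "w \<in> P d n"
    using H by (auto simp: is_join_def is_meet_def)
  have Gs: "\<forall>q\<in>W n. G s q = min (G y q) (G z q)" using join_G[OF y z] H by blast
  have Gu: "\<forall>q\<in>W n. G u q = max (G x q) (G s q)" using meet_G[OF x sP(1)] H by blast
  have Gt: "\<forall>q\<in>W n. G t q = max (G x q) (G y q)" using meet_G[OF x y] H by blast
  have Gv: "\<forall>q\<in>W n. G v q = max (G x q) (G z q)" using meet_G[OF x z] H by blast
  have Gw: "\<forall>q\<in>W n. G w q = min (G t q) (G v q)" using join_G[OF sP(2) sP(3)] H by blast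
  have "\<forall>q\<in>W n. G u q = G w q"
  proof
    fix q assume q: "q \<in> W n"
    show "G u q = G w q" using Gs[rule_format, OF q] Gu[rule_format, OF q] Gt[rule_format, OF q]
        Gv[rule_format, OF q] Gw[rule_format, OF q] by (simp add: max_min_distrib2)
  qed
  then show "u = w" using G_inj[OF sP(4) sP(5)] by blast
qed



lemma finite_P: "finite (P d n)"
proof -
  have "P d n \<subseteq> Pow (signed_set n) \<times> {..d}" by (auto simp: P_def binom_d_def)
  then show ?thesis using finite_signed finite_subset by blast
qed

definition Iv :: "nat \<Rightarrow> nat \<Rightarrow> elt \<Rightarrow> elt \<Rightarrow> elt set" where
  "Iv d n x y = {z \<in> P d n. lt n x z \<and> lt n z y}"

lemma lt_trans:
  assumes x: "x \<in> P d n" and y: "y \<in> P d n" and z: "z \<in> P d n" and xy: "lt n x y" and yz: "lt n y z"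
  shows "lt n x z"
proof -
  have a: "leq n x y" "x \<noteq> y" "leq n y z" using xy yz by (auto simp: lt_def)
  have "leq n x z" using leq_trans[OF x y z a(1) a(3)] .
  moreover have "x \<noteq> z"
  proof
    assume "x = z"
    then have "leq n y x" using a(3) by simp
    then have "x = y" using leq_antisym[OF x y a(1)] by simp
    then show False using a(2) by simp
  qed
  ultimately show ?thesis by (simp add: lt_def)
qed

lemma finite_Iv: "finite (Iv d n x y)"
  by (rule finite_subset[OF _ finite_P]) (auto simp: Iv_def)


lemma cover_ex_aux:
  "\<forall>x y. card (Iv d n x y) = N \<longrightarrow> x \<in> P d n \<longrightarrow> y \<in> P d n \<longrightarrow> lt n x y \<longrightarrow>
     (\<exists>z. covers d n x z \<and> leq n z y)"
proof (induction N rule: less_induct)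
  case (less N)
  show ?case
  proof (intro allI impI)
    fix x y assume N: "card (Iv d n x y) = N" and x: "x \<in> P d n" and y: "y \<in> P d n" and xy: "lt n x y"
    show "\<exists>z. covers d n x z \<and> leq n z y"
    proof (cases "Iv d n x y = {}")
      case True
      then have "covers d n x y" using x y xy by (auto simp: covers_def Iv_def)
      then show ?thesis using leq_refl[OF y] by blast
    next
      case False
      then obtain w where w: "w \<in> Iv d n x y" by blast
      have wP: "w \<in> P d n" and xw: "lt n x w" and wy: "lt n w y" using w by (auto simp: Iv_def)
      have sub: "Iv d n x w \<subseteq> Iv d n x y" using lt_trans[OF _ wP y] wy by (auto simp: Iv_def)
      have "w \<notin> Iv d n x w" by (auto simp: Iv_def lt_def)
      then have "Iv d n x w \<subset> Iv d n x y" using sub w by blast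
      then have "card (Iv d n x w) < N" using N psubset_card_mono[OF finite_Iv] by blast
      then obtain z where z: "covers d n x z" "leq n z w" using less.IH x wP xw by blast
      have "z \<in> P d n" using z by (simp add: covers_def)
      then have "leq n z y" using leq_trans[OF _ wP y] z wy by (simp add: lt_def)
      then show ?thesis using z by blast
    qed
  qed
qed

lemma cover_ex: "x \<in> P d n \<Longrightarrow> y \<in> P d n \<Longrightarrow> lt n x y \<Longrightarrow> \<exists>z. covers d n x z \<and> leq n z y"
  using cover_ex_aux by blast

definition cchain :: "nat \<Rightarrow> nat \<Rightarrow> elt list \<Rightarrow> bool" where
  "cchain d n gs \<longleftrightarrow> (\<forall>i. Suc i < length gs \<longrightarrow> covers d n (gs ! i) (gs ! Suc i))"

lemma chain_ex_aux:
  "\<forall>x y. card (Iv d n x y) = N \<longrightarrow> x \<in> P d n \<longrightarrow> y \<in> P d n \<longrightarrow> lt n x y \<longrightarrow>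
     (\<exists>gs. length gs \<ge> 2 \<and> hd gs = x \<and> last gs = y \<and> cchain d n gs)"
proof (induction N rule: less_induct)
  case (less N)
  show ?case
  proof (intro allI impI)
    fix x y assume N: "card (Iv d n x y) = N" and x: "x \<in> P d n" and y: "y \<in> P d n" and xy: "lt n x y"
    obtain z where z: "covers d n x z" "leq n z y" using cover_ex[OF x y xy] by blast
    have zP: "z \<in> P d n" and xz: "lt n x z" using z by (auto simp: covers_def)
    show "\<exists>gs. length gs \<ge> 2 \<and> hd gs = x \<and> last gs = y \<and> cchain d n gs"
    proof (cases "z = y")
      case True
      then show ?thesis using z by (intro exI[of _ "[x, y]"]) (auto simp: cchain_def)
    next
      case False
      then have zy: "lt n z y" using z by (simp add: lt_def)
      have sub: "Iv d n z y \<subseteq> Iv d n x y" using lt_trans[OF x zP] xz by (auto simp: Iv_def)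
      have "z \<notin> Iv d n z y" by (auto simp: Iv_def lt_def)
      moreover have "z \<in> Iv d n x y" using zP xz zy by (simp add: Iv_def)
      ultimately have "Iv d n z y \<subset> Iv d n x y" using sub by blast
      then have "card (Iv d n z y) < N" using N psubset_card_mono[OF finite_Iv] by blast
      then obtain gs where gs: "length gs \<ge> 2" "hd gs = z" "last gs = y" "cchain d n gs"
        using less.IH zP y zy by blast
      have ne: "gs \<noteq> []" using gs(1) by auto
      have "cchain d n (x # gs)"
        unfolding cchain_def
      proof (intro allI impI)
        fix i assume i: "Suc i < length (x # gs)"
        show "covers d n ((x # gs) ! i) ((x # gs) ! Suc i)"
        proof (cases i)
          case 0
          then show ?thesis using z(1) gs(2) ne by (simp add: hd_conv_nth)
        next
          case (Suc k)
          then show ?thesis using gs(4) i by (simp add: cchain_def)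
        qed
      qed
      then show ?thesis using gs ne by (intro exI[of _ "x # gs"]) auto
    qed
  qed
qed

lemma chain_ex: "x \<in> P d n \<Longrightarrow> y \<in> P d n \<Longrightarrow> lt n x y \<Longrightarrow>
    \<exists>gs. length gs \<ge> 2 \<and> hd gs = x \<and> last gs = y \<and> cchain d n gs"
  using chain_ex_aux by blast

lemma chain_P:
  assumes "length gs \<ge> 2" "cchain d n gs" "j < length gs"
  shows "gs ! j \<in> P d n"
proof (cases "Suc j < length gs")
  case True
  then show ?thesis using assms by (auto simp: cchain_def covers_def)
next
  case False
  then obtain k where k: "j = Suc k" "Suc k < length gs" using assms by (cases j) auto
  then show ?thesis using assms(2) by (auto simp: cchain_def covers_def)
qed

lemma chain_leq:
  assumes "length gs \<ge> 2" "cchain d n gs"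
  shows "j < length gs \<Longrightarrow> i \<le> j \<Longrightarrow> leq n (gs ! i) (gs ! j)"
proof (induction j arbitrary: i)
  case 0
  have "gs ! 0 \<in> P d n" using chain_P[OF assms] 0 by simp
  then show ?case using leq_refl 0 by simp
next
  case (Suc j)
  show ?case
  proof (cases "i = Suc j")
    case True
    have "gs ! Suc j \<in> P d n" using chain_P[OF assms] Suc by simp
    then show ?thesis using leq_refl True by simp
  next
    case False
    then have "leq n (gs ! i) (gs ! j)" using Suc by simp
    moreover have "leq n (gs ! j) (gs ! Suc j)" using assms(2) Suc(2)
      by (auto simp: cchain_def covers_def lt_def)
    moreover have "gs ! i \<in> P d n" "gs ! j \<in> P d n" "gs ! Suc j \<in> P d n"
      using chain_P[OF assms] Suc by auto
    ultimately show ?thesis using leq_trans by blast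
  qed
qed

lemma hd_nth0: "gs \<noteq> [] \<Longrightarrow> hd gs = gs ! 0" by (simp add: hd_conv_nth)

lemma negs_cnt: "negs A = cnt A (-1)"
proof -
  have "{i \<in> A. i < 0} = {w \<in> A. w \<le> -1}" by auto
  then show ?thesis by (simp add: negs_def cnt_def)
qed

lemma negs_anti:
  assumes x: "x \<in> P d n" and y: "y \<in> P d n" and le: "leq n x y" and s: "snd x = snd y"
  shows "negs (fst y) \<le> negs (fst x)"
proof -
  have "-1 \<in> W n" by (simp add: W_def)
  then have "G y (-1) \<le> G x (-1)" using leq_iff[OF x y] le by blast
  then show ?thesis using s by (simp add: G_def negs_cnt)
qed

lemma leq_snd: "leq n x y \<Longrightarrow> snd x \<le> snd y" by (simp add: leq_def)

definition RR :: "nat \<Rightarrow> nat \<Rightarrow> elt \<Rightarrow> elt \<Rightarrow> bool" where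
  "RR d n x z \<longleftrightarrow> x \<in> P d n \<and> z \<in> P d n \<and> leq n x z \<and> snd x = snd z \<and> negs (fst x) = negs (fst z)"

lemma D_imp: "(x, z) \<in> D d n \<Longrightarrow> RR d n x z"
proof -
  assume "(x, z) \<in> D d n"
  then have "admissible_pair d n x z \<or> (x = z \<and> x \<in> P d n)" unfolding D_def by blast
  then consider "x = z" "x \<in> P d n" | "admissible_pair d n x z" by blast
  then show "RR d n x z"
  proof cases
    case 1
    then show ?thesis using leq_refl by (simp add: RR_def)
  next
    case 2
    then obtain gs where gs: "x \<in> P d n" "z \<in> P d n" "snd x = snd z" "lt n x z" "length gs \<ge> 2"
      "hd gs = x" "last gs = z" "\<forall>i. Suc i < length gs \<longrightarrow> cover_type1 d n (gs ! i) (gs ! Suc i)"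
      unfolding admissible_pair_def by blast
    have ne: "\<forall>j. j < length gs \<longrightarrow> negs (fst (gs ! j)) = negs (fst (gs ! 0))"
    proof (intro allI)
      fix j show "j < length gs \<longrightarrow> negs (fst (gs ! j)) = negs (fst (gs ! 0))"
      proof (induction j)
        case 0 show ?case by simp
      next
        case (Suc j)
        show ?case
        proof
          assume j: "Suc j < length gs"
          then have "cover_type1 d n (gs ! j) (gs ! Suc j)" using gs(8) by blast
          then have "negs (fst (gs ! j)) = negs (fst (gs ! Suc j))" by (simp add: cover_type1_def)
          then show "negs (fst (gs ! Suc j)) = negs (fst (gs ! 0))" using Suc j by simp
        qed
      qed
    qed
    have "gs \<noteq> []" using gs(5) by auto
    then have "length gs - 1 < length gs" by simp
    then have "negs (fst (gs ! (length gs - 1))) = negs (fst (gs ! 0))" using ne by blast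
    then have "negs (fst z) = negs (fst x)"
      using gs(6) gs(7) \<open>gs \<noteq> []\<close> by (simp add: hd_conv_nth last_conv_nth)
    then show ?thesis using gs by (simp add: RR_def lt_def)
  qed
qed

lemma D_intro: "RR d n x z \<Longrightarrow> (x, z) \<in> D d n"
proof -
  assume R: "RR d n x z"
  then have x: "x \<in> P d n" and z: "z \<in> P d n" and le: "leq n x z" and s: "snd x = snd z"
    and ng: "negs (fst x) = negs (fst z)" by (auto simp: RR_def)
  show ?thesis
  proof (cases "x = z")
    case True
    have "(z, z) \<in> {(x, x) |x. x \<in> P d n}" using z by blast
    then show ?thesis unfolding D_def True by (rule UnI2)
  next
    case False
    then have xz: "lt n x z" using le by (simp add: lt_def)
    obtain gs where gs: "length gs \<ge> 2" "hd gs = x" "last gs = z" "cchain d n gs"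
      using chain_ex[OF x z xz] by blast
    have nem: "gs \<noteq> []" using gs(1) by auto
    have g0: "gs ! 0 = x" using gs(2) nem by (simp add: hd_conv_nth)
    have gl: "gs ! (length gs - 1) = z" using gs(3) nem by (simp add: last_conv_nth)
    have props: "snd (gs ! k) = snd x \<and> negs (fst (gs ! k)) = negs (fst x)" if k: "k < length gs" for k
    proof -
      have kP: "gs ! k \<in> P d n" using chain_P[OF gs(1) gs(4) k] .
      have l1: "leq n x (gs ! k)" using chain_leq[OF gs(1) gs(4) k, of 0] g0 by simp
      have l2: "leq n (gs ! k) z" using chain_leq[OF gs(1) gs(4), of "length gs - 1" k] gl k by simp
      have s1: "snd (gs ! k) = snd x" using leq_snd[OF l1] leq_snd[OF l2] s by simp
      have "negs (fst (gs ! k)) \<le> negs (fst x)" using negs_anti[OF x kP l1] s1 by simp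
      moreover have "negs (fst z) \<le> negs (fst (gs ! k))" using negs_anti[OF kP z l2] s1 s by simp
      ultimately show ?thesis using s1 ng by simp
    qed
    have "\<forall>i. Suc i < length gs \<longrightarrow> cover_type1 d n (gs ! i) (gs ! Suc i)"
    proof (intro allI impI)
      fix i assume i: "Suc i < length gs"
      then show "cover_type1 d n (gs ! i) (gs ! Suc i)"
        using gs(4) props[of i] props[of "Suc i"] by (simp add: cchain_def cover_type1_def)
    qed
    then have "admissible_pair d n x z" unfolding admissible_pair_def using x z s xz gs by blast
    then show ?thesis by (simp add: D_def)
  qed
qed

lemma doset_part: "doset (P d n) (leq n) (D d n)"
  unfolding doset_def
proof (intro conjI ballI impI)
  show "{(x, x) |x. x \<in> P d n} \<subseteq> D d n" by (auto simp: D_def)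
  show "D d n \<subseteq> {(x, y). x \<in> P d n \<and> y \<in> P d n \<and> leq n x y}"
    using D_imp by (auto simp: RR_def)
next
  fix x y z assume x: "x \<in> P d n" and y: "y \<in> P d n" and z: "z \<in> P d n"
    and le: "leq n x y \<and> leq n y z"
  have sn: "snd x \<le> snd y" "snd y \<le> snd z" using le leq_snd by blast+
  show "(x, z) \<in> D d n \<longleftrightarrow> (x, y) \<in> D d n \<and> (y, z) \<in> D d n"
  proof
    assume "(x, z) \<in> D d n"
    then have R: "RR d n x z" by (rule D_imp)
    then have s: "snd x = snd y" "snd y = snd z" using sn by (auto simp: RR_def)
    have "negs (fst y) \<le> negs (fst x)" using negs_anti[OF x y] le s by blast
    moreover have "negs (fst z) \<le> negs (fst y)" using negs_anti[OF y z] le s by blast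
    ultimately have "negs (fst x) = negs (fst y)" "negs (fst y) = negs (fst z)" using R by (auto simp: RR_def)
    then show "(x, y) \<in> D d n \<and> (y, z) \<in> D d n" using D_intro x y z le s by (simp add: RR_def)
  next
    assume "(x, y) \<in> D d n \<and> (y, z) \<in> D d n"
    then have "RR d n x y" "RR d n y z" using D_imp by blast+
    then have "RR d n x z" using leq_trans[OF x y z] by (auto simp: RR_def)
    then show "(x, z) \<in> D d n" by (rule D_intro)
  qed
qed

theorem proposition3p16:
  fixes n d :: nat
  assumes "n \<ge> 1"
  shows "doset (P d n) (leq n) (D d n) \<and> distrib_lattice_on (P d n) (leq n)"
  using doset_part distrib by blast

end
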